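(* Let $f\colon[0,\infty)\times\mathbb{N}_0\to[0,\infty)$ satisfy the contractive condition: there are constants $\kappa_1,\kappa_2\ge 0$ with $\kappa:=\kappa_1+\kappa_2<1$ such that $$|f(\lambda,y)-f(\lambda',y')|\le \kappa_1|\lambda-\lambda'|+\kappa_2|y-y'|\qquad\text{for all }\lambda,\lambda'\ge0,\ y,y'\in\mathbb{N}_0.$$ Consider the bivariate Markov chain $((N_t,\lambda_t))_{t\in\mathbb{N}}$ defined by: $\lambda_1\ge0$ is a (random or deterministic) starting value, $N_t\mid\mathcal{B}^{N,\lambda}_{t-1}\sim\mathrm{Poisson}(\lambda_t)$ and $\lambda_t=f(\lambda_{t-1},N_{t-1})$, where $\mathcal{B}^{N,\lambda}_t=\sigma(\lambda_1,\dots,\lambda_t,N_1,\dots,N_t)$. Then: (i) the chain has a unique stationary distribution $\pi$ (a probability measure on $\mathbb{N}_0\times[0,\infty)$); (ii) if $(N_1,\lambda_1)\sim\pi$, then $E\lambda_1<\infty$; (iii) if $f(0,0)=0$, then $\pi$ is the point mass at $(0,0)$; if $f(0,0)>0$, then $\pi(\{(y,\lambda)\})<1$ for every $y\in\mathbb{N}_0$, $\lambda\in[0,\infty)$, i.e. $\pi$ is not a point mass.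
   Context: $\mathbb{N}_0=\{0,1,2,\dots\}$. $\mathrm{Poisson}(0)$ denotes the point mass at $0$. The transition mechanism defines a time-homogeneous Markov chain on $\mathbb{N}_0\times[0,\infty)$. *)

theory Defs
  imports "HOL-Probability.Probability"
begin

definition pois :: "real \<Rightarrow> nat pmf" where
  "pois r = (if r \<le> 0 then return_pmf 0 else poisson_pmf r)"

text \<open>State space: pairs (N, lambda) in nat \<times> real (lambda \<ge> 0 on the relevant part),
  with the Borel sigma-algebra of nat \<times> real.\<close>
abbreviation SS :: "(nat \<times> real) measure" where
  "SS \<equiv> borel"

text \<open>The argument is clamped to [0,\<infinity>),
  which changes nothing on the state space nat \<times> [0,\<infinity>).\<close>
definition trans_kernel :: "(real \<Rightarrow> nat \<Rightarrow> real) \<Rightarrow> nat \<times> real \<Rightarrow> (nat \<times> real) measure" where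
  "trans_kernel f x =
     (let r = f (max 0 (snd x)) (fst x)
      in distr (measure_pmf (pois r)) SS (\<lambda>n. (n, r)))"

definition stationary :: "(real \<Rightarrow> nat \<Rightarrow> real) \<Rightarrow> (nat \<times> real) measure \<Rightarrow> bool" where
  "stationary f \<pi> \<longleftrightarrow>
     prob_space \<pi> \<and> sets \<pi> = sets SS \<and>
     emeasure \<pi> (UNIV \<times> {0..}) = 1 \<and>
     (\<forall>A\<in>sets SS. emeasure \<pi> A = (\<integral>\<^sup>+ x. emeasure (trans_kernel f x) A \<partial>\<pi>))"

end

theory Submission
  imports Defs "HOL-Probability.Probability"
begin

lemma rdI: "prob_space M \<Longrightarrow> sets M = sets borel \<Longrightarrow> real_distribution M"
  by (simp add: real_distribution_def real_distribution_axioms_def)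

lemma dist_bound:
  fixes g :: "real \<Rightarrow> real"
  assumes M: "real_distribution M" and gm: "g \<in> borel_measurable borel"
    and gb: "\<And>x. \<bar>g x\<bar> \<le> B" and gl: "\<And>x. \<bar>g x - g 0\<bar> \<le> c * \<bar>x\<bar>" and c: "c \<ge> 0" and C: "C \<ge> 0"
    and mom: "(\<integral>\<^sup>+x. ennreal \<bar>x\<bar> \<partial>M) \<le> ennreal C"
  shows "\<bar>(\<integral>x. g x \<partial>M) - g 0\<bar> \<le> c * C"
proof -
  interpret real_distribution M by fact
  have gm': "g \<in> borel_measurable M" using gm by (simp add: measurable_cong_sets[OF events_eq_borel refl])
  have int: "integrable M g" using gb gm' by (intro integrable_const_bound[where B=B]) auto
  have int2: "integrable M (\<lambda>x. g x - g 0)" using int by simp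
  have eq: "(\<integral>x. g x \<partial>M) - g 0 = (\<integral>x. g x - g 0 \<partial>M)"
  proof -
    have pu: "prob UNIV = 1" using prob_space by (simp add: space_eq_univ)
    show ?thesis by (subst Bochner_Integration.integral_diff[OF int]) (auto simp: pu)
  qed
  have "ennreal \<bar>(\<integral>x. g x \<partial>M) - g 0\<bar> \<le> (\<integral>\<^sup>+x. norm (g x - g 0) \<partial>M)"
    unfolding eq using integral_norm_bound_ennreal[OF int2] by simp
  also have "\<dots> \<le> (\<integral>\<^sup>+x. ennreal c * ennreal \<bar>x\<bar> \<partial>M)"
  proof (rule nn_integral_mono)
    fix x
    have "ennreal (norm (g x - g 0)) \<le> ennreal (c * \<bar>x\<bar>)" using gl[of x] by (intro ennreal_leI) simp
    also have "ennreal (c * \<bar>x\<bar>) = ennreal c * ennreal \<bar>x\<bar>" by (rule ennreal_mult'[OF c])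
    finally show "ennreal (norm (g x - g 0)) \<le> ennreal c * ennreal \<bar>x\<bar>" .
  qed
  also have "\<dots> = ennreal c * (\<integral>\<^sup>+x. ennreal \<bar>x\<bar> \<partial>M)"
    by (rule nn_integral_cmult) (simp add: measurable_cong_sets[OF events_eq_borel refl])
  also have "\<dots> \<le> ennreal c * ennreal C" using mom by (rule mult_left_mono) simp
  also have "\<dots> = ennreal (c * C)" by (rule ennreal_mult'[OF c, symmetric])
  finally have *: "ennreal \<bar>(\<integral>x. g x \<partial>M) - g 0\<bar> \<le> ennreal (c * C)" .
  show ?thesis using * c C by (simp add: ennreal_le_iff)
qed
lemma dct_bound:
  fixes g :: "nat \<Rightarrow> real \<Rightarrow> real"
  assumes M: "real_distribution M" and gm: "\<And>k. g k \<in> borel_measurable borel"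
    and gb: "\<And>k x. \<bar>g k x\<bar> \<le> B" and gl: "\<And>k x. \<bar>g k x - g k 0\<bar> \<le> c k * \<bar>x\<bar>"
    and c: "c \<longlonglongrightarrow> 0"
  shows "(\<lambda>k. (\<integral>x. g k x \<partial>M) - g k 0) \<longlonglongrightarrow> 0"
proof -
  interpret real_distribution M by fact
  have gm': "g k \<in> borel_measurable M" for k using gm by (simp add: measurable_cong_sets[OF events_eq_borel refl])
  have int: "integrable M (g k)" for k using gb gm' by (intro integrable_const_bound[where B=B]) auto
  have pu: "prob UNIV = 1" using prob_space by (simp add: space_eq_univ)
  have eq: "(\<integral>x. g k x \<partial>M) - g k 0 = (\<integral>x. g k x - g k 0 \<partial>M)" for k
    by (subst Bochner_Integration.integral_diff[OF int]) (auto simp: pu)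
  have "(\<lambda>k. (\<integral>x. g k x - g k 0 \<partial>M)) \<longlonglongrightarrow> (\<integral>x. 0 \<partial>M)"
  proof (rule integral_dominated_convergence[where w="\<lambda>x. 2 * B"])
    show "(\<lambda>x. g k x - g k 0) \<in> borel_measurable M" for k using gm' by simp
    show "integrable M (\<lambda>x. 2 * B)" by simp
    show "AE x in M. (\<lambda>k. g k x - g k 0) \<longlonglongrightarrow> 0"
    proof (rule AE_I2)
      fix x
      have "(\<lambda>k. c k * \<bar>x\<bar>) \<longlonglongrightarrow> 0 * \<bar>x\<bar>" by (intro tendsto_intros c)
      hence "(\<lambda>k. c k * \<bar>x\<bar>) \<longlonglongrightarrow> 0" by simp
      thus "(\<lambda>k. g k x - g k 0) \<longlonglongrightarrow> 0"
        by (rule Lim_null_comparison[rotated]) (use gl in \<open>auto intro: always_eventually\<close>)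
    qed
    show "AE x in M. norm (g k x - g k 0) \<le> 2 * B" for k
    proof (rule AE_I2)
      fix x show "norm (g k x - g k 0) \<le> 2 * B"
        using abs_triangle_ineq4[of "g k x" "g k 0"] gb[of k x] gb[of k 0] by simp
    qed
  qed simp
  thus ?thesis unfolding eq by simp
qed


lemma clamp_lip: "\<bar>max 0 (min 1 u) - max 0 (min 1 v)\<bar> \<le> \<bar>u - v :: real\<bar>"
  by (simp add: max_def min_def abs_if)

lemma cts_step_eq:
  assumes ab: "a < b" shows "cts_step a b x = max 0 (min 1 ((b - x) / (b - a)))"
proof -
  have d: "b - a > 0" using ab by simp
  consider "x \<le> a" | "b \<le> x" | "a < x" "x < b" by linarith
  thus ?thesis
  proof cases
    case 1
    hence "1 \<le> (b - x) / (b - a)" using d by (subst le_divide_eq_1_pos) auto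
    thus ?thesis using 1 by (simp add: cts_step_def)
  next
    case 2
    hence "(b - x) / (b - a) \<le> 0" using d by (intro divide_nonpos_pos) auto
    thus ?thesis using 2 ab by (simp add: cts_step_def)
  next
    case 3
    hence "(b - x) / (b - a) \<le> 1" "0 \<le> (b - x) / (b - a)" using d by (auto simp: divide_le_eq_1_pos)
    thus ?thesis using 3 by (simp add: cts_step_def)
  qed
qed

lemma cts_step_bound: "a < b \<Longrightarrow> \<bar>cts_step a b x\<bar> \<le> 1"
  by (simp add: cts_step_eq)

lemma cts_step_lip:
  assumes ab: "a < b"
  shows "\<bar>cts_step a b x - cts_step a b y\<bar> \<le> (1 / (b - a)) * \<bar>x - y\<bar>"
proof -
  have "\<bar>cts_step a b x - cts_step a b y\<bar> \<le> \<bar>(b - x) / (b - a) - (b - y) / (b - a)\<bar>"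
    unfolding cts_step_eq[OF ab] by (rule clamp_lip)
  also have "(b - x) / (b - a) - (b - y) / (b - a) = (y - x) / (b - a)" by (simp add: diff_divide_distrib)
  also have "\<bar>(y - x) / (b - a)\<bar> = (1 / (b - a)) * \<bar>x - y\<bar>" using ab by (simp add: abs_minus_commute)
  finally show ?thesis .
qed

lemma ident_cts:
  assumes M: "real_distribution M" and N: "real_distribution N"
    and eq: "\<And>x y. x < y \<Longrightarrow> (\<integral>z. cts_step x y z \<partial>M) = (\<integral>z. cts_step x y z \<partial>N)"
  shows "M = N"
proof -
  have le: "cdf A x \<le> cdf B x" if A: "real_distribution A" and B: "real_distribution B"
    and e: "\<And>x y. x < y \<Longrightarrow> (\<integral>z. cts_step x y z \<partial>A) = (\<integral>z. cts_step x y z \<partial>B)" for A B x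
  proof -
    have "\<forall>\<^sub>F y in at_right x. cdf A x \<le> cdf B y"
    proof (rule eventually_at_rightI[where b="x + 1"])
      fix y assume "y \<in> {x<..<x + 1}"
      hence xy: "x < y" by simp
      have "cdf A x \<le> (\<integral>z. cts_step x y z \<partial>A)" by (rule real_distribution.cdf_cts_step(1)[OF A xy])
      also have "\<dots> = (\<integral>z. cts_step x y z \<partial>B)" by (rule e[OF xy])
      also have "\<dots> \<le> cdf B y" by (rule real_distribution.cdf_cts_step(2)[OF B xy])
      finally show "cdf A x \<le> cdf B y" .
    qed simp
    moreover have "(cdf B \<longlongrightarrow> cdf B x) (at_right x)"
      using finite_borel_measure.cdf_is_right_cont[OF real_distribution.finite_borel_measure_M[OF B]]
      by (simp add: continuous_within)
    ultimately show ?thesis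
      by (intro tendsto_le[OF _ _ tendsto_const]) auto
  qed
  have "cdf M = cdf N"
  proof
    fix x show "cdf M x = cdf N x"
      using le[OF M N eq] le[OF N M eq[symmetric]] by (simp add: antisym)
  qed
  thus ?thesis by (rule cdf_unique[OF M N])
qed

lemma markov_abs:
  assumes M: "real_distribution M" and mom: "(\<integral>\<^sup>+x. ennreal \<bar>x\<bar> \<partial>M) \<le> ennreal C" and b: "b > 0"
    and C: "C \<ge> 0"
  shows "measure M {x. b \<le> \<bar>x\<bar>} \<le> C / b"
proof -
  interpret real_distribution M by fact
  define S where "S = {x::real. b \<le> \<bar>x\<bar>}"
  have S: "S \<in> sets M" unfolding S_def by measurable
  have "ennreal b * emeasure M S = (\<integral>\<^sup>+x. ennreal b * indicator S x \<partial>M)"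
    by (rule nn_integral_cmult_indicator[OF S, symmetric])
  also have "\<dots> \<le> (\<integral>\<^sup>+x. ennreal \<bar>x\<bar> \<partial>M)"
  proof (rule nn_integral_mono)
    fix x show "ennreal b * indicator S x \<le> ennreal \<bar>x\<bar>"
    proof (cases "x \<in> S")
      case True thus ?thesis by (simp add: S_def ennreal_leI)
    next
      case False thus ?thesis by simp
    qed
  qed
  also have "\<dots> \<le> ennreal C" by (rule mom)
  also have "ennreal b * emeasure M S = ennreal (b * measure M S)"
    using b by (simp add: emeasure_eq_measure ennreal_mult)
  finally have "b * measure M S \<le> C" using C by (simp add: ennreal_le_iff)
  thus ?thesis unfolding S_def[symmetric] using b by (simp add: pos_le_divide_eq mult.commute)
qed

lemma tight_mom:
  assumes M: "\<And>n. real_distribution (\<mu> n)" and mom: "\<And>n. (\<integral>\<^sup>+x. ennreal \<bar>x\<bar> \<partial>\<mu> n) \<le> ennreal C"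
    and C: "C \<ge> 0"
  shows "tight \<mu>"
  unfolding tight_def
proof (intro conjI allI impI)
  show "real_distribution (\<mu> n)" for n by (rule M)
  fix e :: real assume e: "0 < e"
  define b where "b = 2 * C / e + 1"
  have "2 * C / e \<ge> 0" using C e by simp
  hence b: "b > 0" by (simp add: b_def)
  have "e * b = 2 * C + e" using e by (simp add: b_def field_simps)
  hence Cb: "C / b < e" using b C e by (simp add: divide_less_eq)
  have "measure (\<mu> n) {- b<..b} > 1 - e" for n
  proof -
    interpret real_distribution "\<mu> n" by (rule M)
    define S where "S = {x::real. b \<le> \<bar>x\<bar>}"
    have S: "S \<in> sets (\<mu> n)" unfolding S_def by measurable
    have "UNIV - S \<subseteq> {- b<..b}" by (auto simp: S_def)
    hence "measure (\<mu> n) (UNIV - S) \<le> measure (\<mu> n) {- b<..b}"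
      by (intro finite_measure_mono) auto
    moreover have "measure (\<mu> n) (UNIV - S) = 1 - measure (\<mu> n) S"
      using prob_compl[OF S] by (simp add: space_eq_univ)
    moreover have "measure (\<mu> n) S \<le> C / b" unfolding S_def by (rule markov_abs[OF M mom b C])
    ultimately show ?thesis using Cb by linarith
  qed
  moreover have "- b < b" using b by simp
  ultimately show "\<exists>a b. a < b \<and> (\<forall>n. 1 - e < measure (\<mu> n) {a<..b})" by blast
qed



lemma pmf_pois: "r \<ge> 0 \<Longrightarrow> pmf (pois r) n = r ^ n / fact n * exp (- r)"
proof (cases "r = 0")
  case True thus ?thesis by (simp add: pois_def indicator_def power_0_left)
next
  case False
  assume "r \<ge> 0" with False have "r > 0" by simp
  thus ?thesis by (simp add: pois_def)
qed

lemma pois_max: "pois (max 0 r) = pois r"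
  by (simp add: pois_def)

lemma pois_add:
  assumes a: "a \<ge> 0" and b: "b \<ge> 0"
  shows "pois (a + b) = map_pmf (\<lambda>(x, y). x + y) (pair_pmf (pois a) (pois b))"
proof (rule pmf_eqI)
  fix k :: nat
  have pre: "(\<lambda>(x, y). x + y) -` {k} = (\<lambda>j. (j, k - j)) ` {..k}"
    by (auto simp: image_iff)
  have inj: "inj_on (\<lambda>j. (j, k - j)) {..k}" by (auto simp: inj_on_def)
  have "pmf (map_pmf (\<lambda>(x, y). x + y) (pair_pmf (pois a) (pois b))) k
      = (\<Sum>j\<le>k. pmf (pois a) j * pmf (pois b) (k - j))"
    unfolding pmf_map pre
    by (subst measure_measure_pmf_finite) (auto simp: sum.reindex[OF inj] pmf_pair)
  also have "\<dots> = (\<Sum>j\<le>k. (fact k / (fact j * fact (k - j))) * a ^ j * b ^ (k - j)) / fact k * exp (- (a + b))"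
    apply (simp add: pmf_pois a b sum_divide_distrib sum_distrib_right)
    apply (rule sum.cong, simp)
    apply (simp add: exp_add[symmetric] field_simps exp_minus)
    done
  also have "\<dots> = (a + b) ^ k / fact k * exp (- (a + b))"
    by (simp add: binomial_ring binomial_fact)
  also have "\<dots> = pmf (pois (a + b)) k" using a b by (simp add: pmf_pois)
  finally show "pmf (pois (a + b)) k = pmf (map_pmf (\<lambda>(x, y). x + y) (pair_pmf (pois a) (pois b))) k" by simp
qed

lemma pois_mean:
  assumes r: "r \<ge> 0"
  shows "(\<integral>\<^sup>+ n. ennreal (real n) \<partial>measure_pmf (pois r)) = ennreal r"
proof -
  define g where "g n = r ^ n / fact n * exp (- r) * real n" for n
  have "(\<lambda>m. r * (r ^ m /\<^sub>R fact m)) sums (r * exp r)"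
    by (rule sums_mult[OF exp_converges])
  hence "(\<lambda>m. exp (-r) * (r * (r ^ m /\<^sub>R fact m))) sums (exp (-r) * (r * exp r))"
    by (rule sums_mult)
  moreover have "exp (-r) * (r * exp r) = r" by (simp add: exp_minus field_simps)
  moreover have "g (Suc m) = exp (-r) * (r * (r ^ m /\<^sub>R fact m))" for m
  proof -
    have "g (Suc m) = ((real m + 1) * (r * r ^ m)) / ((real m + 1) * fact m) * exp (- r)"
      unfolding g_def fact_Suc power_Suc by (simp add: algebra_simps)
    also have "\<dots> = (r * r ^ m) / fact m * exp (-r)"
      by (subst mult_divide_mult_cancel_left) auto
    also have "\<dots> = exp (-r) * (r * (r ^ m /\<^sub>R fact m))" by (simp add: divide_inverse_commute)
    finally show ?thesis .
  qed
  ultimately have "(\<lambda>m. g (Suc m)) sums r" by simp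
  hence gs: "g sums r" by (subst (asm) sums_Suc_iff) (simp add: g_def)
  have g0: "g n \<ge> 0" for n using r by (simp add: g_def)
  have "(\<integral>\<^sup>+ n. ennreal (real n) \<partial>measure_pmf (pois r)) = (\<integral>\<^sup>+ n. ennreal (g n) \<partial>count_space UNIV)"
    unfolding nn_integral_measure_pmf
    by (intro nn_integral_cong) (simp add: g_def pmf_pois r ennreal_mult'[symmetric])
  also have "\<dots> = (\<Sum>n. ennreal (g n))" by (simp add: nn_integral_count_space_nat)
  also have "\<dots> = ennreal r"
  proof -
    have "(\<lambda>n. ennreal (g n)) sums ennreal r" using gs g0 r by (subst sums_ennreal) auto
    thus ?thesis by (simp add: sums_iff)
  qed
  finally show ?thesis .
qed

lemma lip_continuous:
  fixes g :: "real \<Rightarrow> real"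
  assumes "\<And>x y. \<bar>g x - g y\<bar> \<le> C * \<bar>x - y\<bar>" and "C \<ge> 0"
  shows "continuous_on UNIV g"
  by (rule lipschitz_on_continuous_on[of C]) (use assms in \<open>auto intro!: lipschitz_onI simp: dist_real_def\<close>)

lemma lip_measurable:
  fixes g :: "real \<Rightarrow> real"
  assumes "\<And>x y. \<bar>g x - g y\<bar> \<le> C * \<bar>x - y\<bar>" and "C \<ge> 0"
  shows "g \<in> borel_measurable borel"
  by (rule borel_measurable_continuous_onI[OF lip_continuous[OF assms]])

lemma lip_isCont:
  fixes g :: "real \<Rightarrow> real"
  assumes "\<And>x y. \<bar>g x - g y\<bar> \<le> C * \<bar>x - y\<bar>" and "C \<ge> 0"
  shows "isCont g x"
  using lip_continuous[OF assms] by (simp add: continuous_on_eq_continuous_at)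

lemma kernel_meas:
  fixes g :: "real \<Rightarrow> nat \<Rightarrow> 'b"
  assumes g: "\<And>n. (\<lambda>s. g s n) \<in> borel \<rightarrow>\<^sub>M N"
  shows "(\<lambda>s. distr (measure_pmf (pois s)) N (g s)) \<in> borel \<rightarrow>\<^sub>M subprob_algebra N"
proof (rule measurable_subprob_algebra)
  fix s :: real
  have gs: "g s \<in> measure_pmf (pois s) \<rightarrow>\<^sub>M N" using measurable_space[OF g] by auto
  show "subprob_space (distr (measure_pmf (pois s)) N (g s))"
    by (rule prob_space_imp_subprob_space, rule measure_pmf.prob_space_distr[OF gs])
  show "sets (distr (measure_pmf (pois s)) N (g s)) = sets N" by simp
next
  fix A assume A: "A \<in> sets N"
  have eq: "emeasure (distr (measure_pmf (pois s)) N (g s)) A =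
      (\<Sum>n. ennreal ((max 0 s) ^ n / fact n * exp (- max 0 s)) * indicator A (g s n))" for s
  proof -
    have gs: "g s \<in> measure_pmf (pois s) \<rightarrow>\<^sub>M N" using measurable_space[OF g] by auto
    have "emeasure (distr (measure_pmf (pois s)) N (g s)) A = (\<integral>\<^sup>+n. indicator A (g s n) \<partial>measure_pmf (pois s))"
    proof -
      have "emeasure (distr (measure_pmf (pois s)) N (g s)) A = emeasure (measure_pmf (pois s)) (g s -` A)"
        using A gs by (simp add: emeasure_distr)
      also have "\<dots> = (\<integral>\<^sup>+n. indicator (g s -` A) n \<partial>measure_pmf (pois s))"
        by (rule nn_integral_indicator[symmetric]) simp
      finally show ?thesis by (simp add: indicator_vimage[symmetric])
    qed
    also have "\<dots> = (\<integral>\<^sup>+n. ennreal (pmf (pois (max 0 s)) n) * indicator A (g s n) \<partial>count_space UNIV)"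
      by (simp add: nn_integral_measure_pmf pois_max)
    also have "\<dots> = (\<Sum>n. ennreal ((max 0 s) ^ n / fact n * exp (- max 0 s)) * indicator A (g s n))"
      by (simp add: nn_integral_count_space_nat pmf_pois)
    finally show ?thesis .
  qed
  have [measurable]: "(\<lambda>s. g s n) \<in> borel \<rightarrow>\<^sub>M N" for n by (rule g)
  show "(\<lambda>s. emeasure (distr (measure_pmf (pois s)) N (g s)) A) \<in> borel_measurable borel"
    unfolding eq using A by measurable
qed

locale chain =
  fixes f :: "real \<Rightarrow> nat \<Rightarrow> real" and \<kappa>1 \<kappa>2 :: real
  assumes f_nonneg: "\<And>l y. l \<ge> 0 \<Longrightarrow> f l y \<ge> 0"
    and k1: "\<kappa>1 \<ge> 0" and k2: "\<kappa>2 \<ge> 0" and k: "\<kappa>1 + \<kappa>2 < 1"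
    and contr: "\<And>l l' y y'. l \<ge> 0 \<Longrightarrow> l' \<ge> 0 \<Longrightarrow>
                  \<bar>f l y - f l' y'\<bar> \<le> \<kappa>1 * \<bar>l - l'\<bar> + \<kappa>2 * \<bar>real y - real y'\<bar>"
begin

definition Phi :: "(real \<Rightarrow> real) \<Rightarrow> real \<Rightarrow> real" where
  "Phi h s = (\<integral>n. h (f (max 0 s) n) \<partial>measure_pmf (pois s))"

lemma Phi_max: "Phi h (max 0 s) = Phi h s"
  by (simp add: Phi_def pois_max)

lemma Phi_bound:
  assumes hb: "\<And>x. \<bar>h x\<bar> \<le> B"
  shows "\<bar>Phi h s\<bar> \<le> B"
proof -
  have "\<bar>Phi h s\<bar> \<le> (\<integral>n. \<bar>h (f (max 0 s) n)\<bar> \<partial>measure_pmf (pois s))"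
    unfolding Phi_def by (rule integral_abs_bound)
  also have "\<dots> \<le> B"
    using hb by (intro measure_pmf.integral_le_const measure_pmf.integrable_const_bound[where B=B]) auto
  finally show ?thesis .
qed

lemma Phi_lip_aux:
  assumes hb: "\<And>x. \<bar>h x\<bar> \<le> B" and hl: "\<And>x y. \<bar>h x - h y\<bar> \<le> L * \<bar>x - y\<bar>"
    and L: "L \<ge> 0" and a: "0 \<le> a" and ac: "a \<le> c"
  shows "\<bar>Phi h c - Phi h a\<bar> \<le> (\<kappa>1 + \<kappa>2) * L * (c - a)"
proof -
  define d where "d = c - a"
  have d: "d \<ge> 0" using ac by (simp add: d_def)
  have c: "c \<ge> 0" using a ac by simp
  define Q where "Q = pair_pmf (pois a) (pois d)"
  have cad: "c = a + d" by (simp add: d_def)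
  have "Phi h c = (\<integral>p. h (f c (fst p + snd p)) \<partial>measure_pmf Q)"
    unfolding Phi_def Q_def using c by (simp add: cad pois_add[OF a d] case_prod_beta)
  moreover have "Phi h a = (\<integral>p. h (f a (fst p)) \<partial>measure_pmf Q)"
  proof -
    have "Phi h a = (\<integral>n. h (f a n) \<partial>measure_pmf (map_pmf fst Q))"
      unfolding Phi_def Q_def map_fst_pair_pmf using a by simp
    thus ?thesis by simp
  qed
  ultimately have eqd: "Phi h c - Phi h a = (\<integral>p. h (f c (fst p + snd p)) - h (f a (fst p)) \<partial>measure_pmf Q)"
    using hb by (subst Bochner_Integration.integral_diff)
      (auto intro!: measure_pmf.integrable_const_bound[where B=B])
  have int: "integrable (measure_pmf Q) (\<lambda>p. h (f c (fst p + snd p)) - h (f a (fst p)))"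
  proof (rule measure_pmf.integrable_const_bound[where B="2*B"])
    show "AE x in measure_pmf Q. norm (h (f c (fst x + snd x)) - h (f a (fst x))) \<le> 2 * B"
    proof (intro AE_I2)
      fix x :: "nat \<times> nat"
      show "norm (h (f c (fst x + snd x)) - h (f a (fst x))) \<le> 2 * B"
        using abs_triangle_ineq4[of "h (f c (fst x + snd x))" "h (f a (fst x))"]
          hb[of "f c (fst x + snd x)"] hb[of "f a (fst x)"] by simp
    qed
  qed simp
  have "\<bar>Phi h c - Phi h a\<bar> \<le> (\<integral>\<^sup>+p. norm (h (f c (fst p + snd p)) - h (f a (fst p))) \<partial>measure_pmf Q)"
    using integral_norm_bound_ennreal[OF int] unfolding eqd real_norm_def .
  also have "\<dots> \<le> (\<integral>\<^sup>+p. ennreal (L * \<kappa>1 * d) + ennreal (L * \<kappa>2) * ennreal (real (snd p)) \<partial>measure_pmf Q)"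
  proof (rule nn_integral_mono)
    fix p :: "nat \<times> nat"
    have "norm (h (f c (fst p + snd p)) - h (f a (fst p))) \<le> L * \<bar>f c (fst p + snd p) - f a (fst p)\<bar>"
      using hl by simp
    also have "\<dots> \<le> L * (\<kappa>1 * \<bar>c - a\<bar> + \<kappa>2 * \<bar>real (fst p + snd p) - real (fst p)\<bar>)"
      using contr[OF c a, of "fst p + snd p" "fst p"] L by (intro mult_left_mono) auto
    also have "\<dots> = L * \<kappa>1 * d + L * \<kappa>2 * real (snd p)"
      using ac by (simp add: d_def algebra_simps)
    finally have le: "norm (h (f c (fst p + snd p)) - h (f a (fst p))) \<le> L * \<kappa>1 * d + L * \<kappa>2 * real (snd p)" .
    have n1: "L * \<kappa>1 * d \<ge> 0" "L * \<kappa>2 \<ge> 0" "L * \<kappa>2 * real (snd p) \<ge> 0" using L k1 k2 d by auto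
    have "ennreal (L * \<kappa>1 * d) + ennreal (L * \<kappa>2) * ennreal (real (snd p)) = ennreal (L * \<kappa>1 * d + L * \<kappa>2 * real (snd p))"
      using n1 by (simp only: ennreal_mult[symmetric] ennreal_plus[symmetric] of_nat_0_le_iff)
    thus "ennreal (norm (h (f c (fst p + snd p)) - h (f a (fst p)))) \<le> ennreal (L * \<kappa>1 * d) + ennreal (L * \<kappa>2) * ennreal (real (snd p))"
      using le by (simp add: ennreal_leI)
  qed
  also have "\<dots> = ennreal (L * \<kappa>1 * d) + ennreal (L * \<kappa>2) * (\<integral>\<^sup>+p. ennreal (real (snd p)) \<partial>measure_pmf Q)"
    by (subst nn_integral_add) (simp_all add: nn_integral_cmult measure_pmf.emeasure_space_1)
  also have "(\<integral>\<^sup>+p. ennreal (real (snd p)) \<partial>measure_pmf Q) = ennreal d"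
  proof -
    have "(\<integral>\<^sup>+p. ennreal (real (snd p)) \<partial>measure_pmf Q) = (\<integral>\<^sup>+n. ennreal (real n) \<partial>measure_pmf (map_pmf snd Q))"
      by simp
    also have "\<dots> = ennreal d" unfolding Q_def map_snd_pair_pmf by (rule pois_mean[OF d])
    finally show ?thesis .
  qed
  also have "ennreal (L * \<kappa>1 * d) + ennreal (L * \<kappa>2) * ennreal d = ennreal ((\<kappa>1 + \<kappa>2) * L * (c - a))"
  proof -
    have n1: "L * \<kappa>1 * d \<ge> 0" "L * \<kappa>2 \<ge> 0" using L k1 k2 d by auto
    have "ennreal (L * \<kappa>1 * d) + ennreal (L * \<kappa>2) * ennreal d = ennreal (L * \<kappa>1 * d + L * \<kappa>2 * d)"
      using n1 d by (simp only: ennreal_mult[symmetric] ennreal_plus[symmetric] mult_nonneg_nonneg)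
    also have "L * \<kappa>1 * d + L * \<kappa>2 * d = (\<kappa>1 + \<kappa>2) * L * (c - a)" by (simp add: d_def algebra_simps)
    finally show ?thesis .
  qed
  finally have "ennreal \<bar>Phi h c - Phi h a\<bar> \<le> ennreal ((\<kappa>1 + \<kappa>2) * L * (c - a))" .
  moreover have "(\<kappa>1 + \<kappa>2) * L * (c - a) \<ge> 0" using L k1 k2 ac by simp
  ultimately show ?thesis by (simp add: ennreal_le_iff)
qed

lemma Phi_lip:
  assumes hb: "\<And>x. \<bar>h x\<bar> \<le> B" and hl: "\<And>x y. \<bar>h x - h y\<bar> \<le> L * \<bar>x - y\<bar>"
    and L: "L \<ge> 0"
  shows "\<bar>Phi h s - Phi h t\<bar> \<le> ((\<kappa>1 + \<kappa>2) * L) * \<bar>s - t\<bar>"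
proof -
  have m: "\<bar>max 0 s - max 0 t\<bar> \<le> \<bar>s - t\<bar>" by (auto simp: max_def abs_if)
  have kl: "(\<kappa>1 + \<kappa>2) * L \<ge> 0" using k1 k2 L by simp
  have "\<bar>Phi h (max 0 s) - Phi h (max 0 t)\<bar> \<le> (\<kappa>1 + \<kappa>2) * L * \<bar>max 0 s - max 0 t\<bar>"
  proof (cases "max 0 s \<le> max 0 t")
    case True
    from Phi_lip_aux[OF hb hl L _ True] show ?thesis using True by (simp add: abs_minus_commute)
  next
    case False
    hence le: "max 0 t \<le> max 0 s" by linarith
    have z: "0 \<le> max 0 t" by simp
    have e: "\<bar>max 0 s - max 0 t\<bar> = max 0 s - max 0 t" using le by simp
    from Phi_lip_aux[OF hb hl L z le] show ?thesis unfolding e by (simp only: abs_minus_commute)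
  qed
  also have "\<dots> \<le> (\<kappa>1 + \<kappa>2) * L * \<bar>s - t\<bar>" using m kl by (rule mult_left_mono)
  finally show ?thesis by (simp add: Phi_max)
qed

lemma Phi_iter:
  assumes hb: "\<And>x. \<bar>h x\<bar> \<le> B" and hl: "\<And>x y. \<bar>h x - h y\<bar> \<le> L * \<bar>x - y\<bar>"
    and L: "L \<ge> 0"
  shows "(\<forall>x. \<bar>(Phi ^^ k) h x\<bar> \<le> B) \<and>
         (\<forall>x y. \<bar>(Phi ^^ k) h x - (Phi ^^ k) h y\<bar> \<le> ((\<kappa>1 + \<kappa>2) ^ k * L) * \<bar>x - y\<bar>)"
proof (induction k)
  case 0 thus ?case using hb hl by simp
next
  case (Suc k)
  have kl: "(\<kappa>1 + \<kappa>2) ^ k * L \<ge> 0" using k1 k2 L by simp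
  have "\<bar>Phi ((Phi ^^ k) h) x - Phi ((Phi ^^ k) h) y\<bar> \<le> ((\<kappa>1 + \<kappa>2) ^ Suc k * L) * \<bar>x - y\<bar>" for x y
    using Phi_lip[of "(Phi ^^ k) h" B "(\<kappa>1 + \<kappa>2) ^ k * L" x y] Suc kl by (simp add: mult.assoc)
  moreover have "\<bar>Phi ((Phi ^^ k) h) x\<bar> \<le> B" for x using Phi_bound Suc by blast
  ultimately show ?case by simp
qed

definition Pk :: "real \<Rightarrow> real measure" where
  "Pk s = distr (measure_pmf (pois s)) borel (\<lambda>n. f (max 0 s) n)"

definition Gk :: "real \<Rightarrow> (nat \<times> real) measure" where
  "Gk s = distr (measure_pmf (pois s)) borel (\<lambda>n. (n, s))"

definition rr :: "nat \<times> real \<Rightarrow> real" where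
  "rr x = f (max 0 (snd x)) (fst x)"

lemma f_lip: "\<bar>f (max 0 s) n - f (max 0 t) n\<bar> \<le> \<kappa>1 * \<bar>s - t\<bar>"
proof -
  have "\<bar>f (max 0 s) n - f (max 0 t) n\<bar> \<le> \<kappa>1 * \<bar>max 0 s - max 0 t\<bar>"
    using contr[of "max 0 s" "max 0 t" n n] by simp
  also have "\<dots> \<le> \<kappa>1 * \<bar>s - t\<bar>" using k1 by (intro mult_left_mono) (auto simp: max_def abs_if)
  finally show ?thesis .
qed

lemma fmax_meas[measurable]: "(\<lambda>s. f (max 0 s) n) \<in> borel_measurable borel"
  by (rule lip_measurable[OF f_lip k1])

lemma Pk_meas[measurable]: "Pk \<in> borel \<rightarrow>\<^sub>M subprob_algebra borel"
  unfolding Pk_def[abs_def] by (rule kernel_meas) simp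

lemma Gk_meas[measurable]: "Gk \<in> borel \<rightarrow>\<^sub>M subprob_algebra borel"
  unfolding Gk_def[abs_def] 
  by (rule kernel_meas, rule borel_measurable_continuous_onI) (intro continuous_intros)

lemma prob_Pk: "prob_space (Pk s)"
  unfolding Pk_def by (rule measure_pmf.prob_space_distr) simp

lemma sets_Pk[simp]: "sets (Pk s) = sets borel"
  by (simp add: Pk_def)

lemma prob_Gk: "prob_space (Gk s)"
  unfolding Gk_def by (rule measure_pmf.prob_space_distr) simp

lemma sets_Gk[simp]: "sets (Gk s) = sets borel"
  by (simp add: Gk_def)

lemma Pk_integral: "h \<in> borel_measurable borel \<Longrightarrow> (\<integral>x. h x \<partial>Pk s) = Phi h s"
  unfolding Pk_def Phi_def by (subst integral_distr) auto

lemma rr_meas[measurable]: "rr \<in> borel_measurable borel"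
proof -
  have fst: "(fst :: nat \<times> real \<Rightarrow> nat) \<in> borel \<rightarrow>\<^sub>M count_space UNIV"
  proof -
    have "(fst :: nat \<times> real \<Rightarrow> nat) \<in> borel \<rightarrow>\<^sub>M borel"
      by (rule borel_measurable_continuous_onI) (intro continuous_intros)
    thus ?thesis using measurable_cong_sets[OF refl sets_borel_eq_count_space] by blast
  qed
  have i: "(\<lambda>x. f (max 0 (snd x)) i) \<in> borel_measurable (borel :: (nat \<times> real) measure)" for i
  proof -
    have "(snd :: nat \<times> real \<Rightarrow> real) \<in> borel \<rightarrow>\<^sub>M borel"
      by (rule borel_measurable_continuous_onI) (intro continuous_intros)
    thus ?thesis using measurable_compose[OF _ fmax_meas] by blast
  qed
  show ?thesis unfolding rr_def[abs_def]
    by (rule measurable_compose_countable'[OF i fst]) simp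
qed

end



context chain begin

lemma Pk_meas': "sets M = sets borel \<Longrightarrow> Pk \<in> M \<rightarrow>\<^sub>M subprob_algebra borel"
  using Pk_meas measurable_cong_sets[of M borel "subprob_algebra borel" "subprob_algebra borel"] by simp

lemma Gk_meas': "sets M = sets borel \<Longrightarrow> Gk \<in> M \<rightarrow>\<^sub>M subprob_algebra borel"
  using Gk_meas measurable_cong_sets[of M borel "subprob_algebra borel" "subprob_algebra borel"] by simp

lemma bind_rd:
  assumes "real_distribution \<nu>"
  shows "real_distribution (\<nu> \<bind> Pk)"
proof -
  interpret real_distribution \<nu> by fact
  have m: "Pk \<in> \<nu> \<rightarrow>\<^sub>M subprob_algebra borel" by (rule Pk_meas') simp
  show ?thesis
  proof (rule rdI)
    show "prob_space (\<nu> \<bind> Pk)" by (rule prob_space_bind[OF _ m]) (simp add: prob_Pk)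
    show "sets (\<nu> \<bind> Pk) = sets borel" by (rule sets_bind) (auto simp: not_empty)
  qed
qed

lemma bind_integral:
  assumes "real_distribution \<nu>" and hm: "h \<in> borel_measurable borel" and hb: "\<And>x. \<bar>h x\<bar> \<le> B"
  shows "(\<integral>x. h x \<partial>(\<nu> \<bind> Pk)) = (\<integral>s. Phi h s \<partial>\<nu>)"
proof -
  interpret real_distribution \<nu> by fact
  have m: "Pk \<in> \<nu> \<rightarrow>\<^sub>M subprob_algebra borel" by (rule Pk_meas') simp
  have "(\<integral>x. h x \<partial>(\<nu> \<bind> Pk)) = (\<integral>s. (\<integral>x. h x \<partial>Pk s) \<partial>\<nu>)"
  proof (rule integral_bind[OF hm _ m])
    show "\<And>x. x \<in> space borel \<Longrightarrow> \<bar>h x\<bar> \<le> B" using hb by simp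
    show "finite_measure \<nu>" by (rule finite_measure_axioms)
    show "AE x in \<nu>. emeasure (Pk x) (space (Pk x)) \<le> ennreal 1"
      by (intro AE_I2) (simp add: prob_space.emeasure_space_1[OF prob_Pk])
  qed
  also have "\<dots> = (\<integral>s. Phi h s \<partial>\<nu>)" using hm by (simp add: Pk_integral)
  finally show ?thesis .
qed

lemma bind_moment:
  assumes "real_distribution \<nu>"
  shows "(\<integral>\<^sup>+x. ennreal \<bar>x\<bar> \<partial>(\<nu> \<bind> Pk)) \<le> ennreal (f 0 0) + ennreal (\<kappa>1 + \<kappa>2) * (\<integral>\<^sup>+x. ennreal \<bar>x\<bar> \<partial>\<nu>)"
proof -
  interpret real_distribution \<nu> by fact
  have m: "Pk \<in> \<nu> \<rightarrow>\<^sub>M subprob_algebra borel" by (rule Pk_meas') simp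
  have f00: "f 0 0 \<ge> 0" using f_nonneg by simp
  have kk: "\<kappa>1 + \<kappa>2 \<ge> 0" using k1 k2 by simp
  have inner: "(\<integral>\<^sup>+x. ennreal \<bar>x\<bar> \<partial>Pk s) \<le> ennreal (f 0 0) + ennreal (\<kappa>1 + \<kappa>2) * ennreal \<bar>s\<bar>" for s
  proof -
    let ?m = "max 0 s"
    have "(\<integral>\<^sup>+x. ennreal \<bar>x\<bar> \<partial>Pk s) = (\<integral>\<^sup>+n. ennreal \<bar>f ?m n\<bar> \<partial>measure_pmf (pois s))"
      unfolding Pk_def by (subst nn_integral_distr) auto
    also have "\<dots> \<le> (\<integral>\<^sup>+n. ennreal (f 0 0 + \<kappa>1 * ?m) + ennreal \<kappa>2 * ennreal (real n) \<partial>measure_pmf (pois s))"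
    proof (rule nn_integral_mono)
      fix n
      have "\<bar>f ?m n - f 0 0\<bar> \<le> \<kappa>1 * \<bar>?m - 0\<bar> + \<kappa>2 * \<bar>real n - real 0\<bar>"
        by (rule contr) auto
      hence "\<bar>f ?m n\<bar> \<le> f 0 0 + \<kappa>1 * ?m + \<kappa>2 * real n"
        using f_nonneg[of ?m n] by simp
      hence "ennreal \<bar>f ?m n\<bar> \<le> ennreal (f 0 0 + \<kappa>1 * ?m + \<kappa>2 * real n)" by (rule ennreal_leI)
      also have "\<dots> = ennreal (f 0 0 + \<kappa>1 * ?m) + ennreal \<kappa>2 * ennreal (real n)"
      proof -
        have h1: "0 \<le> f 0 0 + \<kappa>1 * ?m" using f00 k1 by simp
        have h2: "0 \<le> \<kappa>2 * real n" using k2 by simp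
        show ?thesis by (simp only: ennreal_plus[OF h1 h2] ennreal_mult'[OF k2])
      qed
      finally show "ennreal \<bar>f ?m n\<bar> \<le> ennreal (f 0 0 + \<kappa>1 * ?m) + ennreal \<kappa>2 * ennreal (real n)" .
    qed
    also have "\<dots> = ennreal (f 0 0 + \<kappa>1 * ?m) + ennreal \<kappa>2 * (\<integral>\<^sup>+n. ennreal (real n) \<partial>measure_pmf (pois s))"
      by (subst nn_integral_add) (simp_all add: nn_integral_cmult measure_pmf.emeasure_space_1)
    also have "(\<integral>\<^sup>+n. ennreal (real n) \<partial>measure_pmf (pois s)) = ennreal ?m"
      using pois_mean[of ?m] by (simp add: pois_max)
    also have "ennreal (f 0 0 + \<kappa>1 * ?m) + ennreal \<kappa>2 * ennreal ?m = ennreal (f 0 0 + (\<kappa>1 + \<kappa>2) * ?m)"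
    proof -
      have h1: "0 \<le> f 0 0 + \<kappa>1 * ?m" using f00 k1 by simp
      have h3: "0 \<le> \<kappa>2 * ?m" using k2 by simp
      have "ennreal (f 0 0 + \<kappa>1 * ?m) + ennreal \<kappa>2 * ennreal ?m = ennreal (f 0 0 + \<kappa>1 * ?m + \<kappa>2 * ?m)"
        by (simp only: ennreal_mult'[OF k2, symmetric] ennreal_plus[OF h1 h3, symmetric])
      also have "f 0 0 + \<kappa>1 * ?m + \<kappa>2 * ?m = f 0 0 + (\<kappa>1 + \<kappa>2) * ?m" by (simp add: algebra_simps)
      finally show ?thesis .
    qed
    also have "\<dots> \<le> ennreal (f 0 0 + (\<kappa>1 + \<kappa>2) * \<bar>s\<bar>)"
      using kk by (intro ennreal_leI add_left_mono mult_left_mono) auto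
    also have "\<dots> = ennreal (f 0 0) + ennreal (\<kappa>1 + \<kappa>2) * ennreal \<bar>s\<bar>"
    proof -
      have h: "0 \<le> (\<kappa>1 + \<kappa>2) * \<bar>s\<bar>" using kk by simp
      show ?thesis by (simp only: ennreal_plus[OF f00 h] ennreal_mult'[OF kk])
    qed
    finally show ?thesis .
  qed
  have "(\<integral>\<^sup>+x. ennreal \<bar>x\<bar> \<partial>(\<nu> \<bind> Pk)) = (\<integral>\<^sup>+s. (\<integral>\<^sup>+x. ennreal \<bar>x\<bar> \<partial>Pk s) \<partial>\<nu>)"
    by (rule nn_integral_bind[OF _ m]) simp
  also have "\<dots> \<le> (\<integral>\<^sup>+s. ennreal (f 0 0) + ennreal (\<kappa>1 + \<kappa>2) * ennreal \<bar>s\<bar> \<partial>\<nu>)"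
    by (intro nn_integral_mono inner)
  also have "\<dots> = ennreal (f 0 0) + ennreal (\<kappa>1 + \<kappa>2) * (\<integral>\<^sup>+x. ennreal \<bar>x\<bar> \<partial>\<nu>)"
  proof -
    have u: "emeasure \<nu> UNIV = 1" using emeasure_space_1 by (simp add: space_eq_univ)
    show ?thesis
      by (subst nn_integral_add) (auto simp: nn_integral_cmult u measurable_cong_sets[OF events_eq_borel refl])
  qed
  finally show ?thesis .
qed

end


context chain begin

definition BL :: "real \<Rightarrow> real \<Rightarrow> (real \<Rightarrow> real) \<Rightarrow> bool" where
  "BL B L h \<longleftrightarrow> L \<ge> 0 \<and> (\<forall>x. \<bar>h x\<bar> \<le> B) \<and> (\<forall>x y. \<bar>h x - h y\<bar> \<le> L * \<bar>x - y\<bar>)"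

lemma BL_Phi_iter: "BL B L h \<Longrightarrow> BL B ((\<kappa>1 + \<kappa>2) ^ k * L) ((Phi ^^ k) h)"
  using Phi_iter[of h B L k] k1 k2 unfolding BL_def by auto

lemma BL_meas: "BL B L h \<Longrightarrow> h \<in> borel_measurable borel"
  unfolding BL_def using lip_measurable by blast

lemma BL_cont: "BL B L h \<Longrightarrow> isCont h x"
  unfolding BL_def using lip_isCont by blast

lemma BL_cts: "x < y \<Longrightarrow> BL 1 (1 / (y - x)) (cts_step x y)"
  unfolding BL_def using cts_step_bound cts_step_lip by auto

lemma fixed_iter:
  assumes \<nu>: "real_distribution \<nu>" and fp: "\<nu> \<bind> Pk = \<nu>" and h: "BL B L h"
  shows "(\<integral>x. h x \<partial>\<nu>) = (\<integral>x. (Phi ^^ k) h x \<partial>\<nu>)"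
proof (induction k)
  case 0 thus ?case by simp
next
  case (Suc k)
  have h': "BL B ((\<kappa>1 + \<kappa>2) ^ k * L) ((Phi ^^ k) h)" by (rule BL_Phi_iter[OF h])
  have "(\<integral>x. (Phi ^^ k) h x \<partial>\<nu>) = (\<integral>x. (Phi ^^ k) h x \<partial>(\<nu> \<bind> Pk))" by (simp add: fp)
  also have "\<dots> = (\<integral>x. Phi ((Phi ^^ k) h) x \<partial>\<nu>)"
    by (rule bind_integral[OF \<nu> BL_meas[OF h']]) (use h' in \<open>auto simp: BL_def\<close>)
  finally show ?case using Suc by simp
qed

lemma unique_fp:
  assumes \<nu>1: "real_distribution \<nu>1" and fp1: "\<nu>1 \<bind> Pk = \<nu>1"
    and \<nu>2: "real_distribution \<nu>2" and fp2: "\<nu>2 \<bind> Pk = \<nu>2"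
  shows "\<nu>1 = \<nu>2"
proof (rule ident_cts[OF \<nu>1 \<nu>2])
  fix x y :: real assume xy: "x < y"
  define h where "h = cts_step x y"
  define L where "L = 1 / (y - x)"
  have h: "BL 1 L h" unfolding h_def L_def by (rule BL_cts[OF xy])
  define g where "g k = (Phi ^^ k) h" for k
  have gB: "BL 1 ((\<kappa>1 + \<kappa>2) ^ k * L) (g k)" for k unfolding g_def by (rule BL_Phi_iter[OF h])
  have c0: "(\<lambda>k. (\<kappa>1 + \<kappa>2) ^ k * L) \<longlonglongrightarrow> 0 * L"
    by (intro tendsto_intros LIMSEQ_power_zero) (use k1 k2 k in simp)
  have lim: "(\<lambda>k. (\<integral>z. g k z \<partial>\<nu>) - g k 0) \<longlonglongrightarrow> 0" if \<nu>: "real_distribution \<nu>" for \<nu>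
  proof (rule dct_bound[OF \<nu>, where B=1 and c="\<lambda>k. (\<kappa>1 + \<kappa>2) ^ k * L"])
    show "g k \<in> borel_measurable borel" for k by (rule BL_meas[OF gB])
    show "\<bar>g k z\<bar> \<le> 1" for k z using gB[of k] by (simp add: BL_def)
    show "\<bar>g k z - g k 0\<bar> \<le> (\<kappa>1 + \<kappa>2) ^ k * L * \<bar>z\<bar>" for k z using gB[of k] unfolding BL_def
      by (metis diff_zero)
    show "(\<lambda>k. (\<kappa>1 + \<kappa>2) ^ k * L) \<longlonglongrightarrow> 0" using c0 by simp
  qed
  have "(\<lambda>k. ((\<integral>z. g k z \<partial>\<nu>1) - g k 0) - ((\<integral>z. g k z \<partial>\<nu>2) - g k 0)) \<longlonglongrightarrow> 0 - 0"
    by (intro tendsto_diff lim \<nu>1 \<nu>2)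
  moreover have "((\<integral>z. g k z \<partial>\<nu>1) - g k 0) - ((\<integral>z. g k z \<partial>\<nu>2) - g k 0) = (\<integral>z. h z \<partial>\<nu>1) - (\<integral>z. h z \<partial>\<nu>2)" for k
    using fixed_iter[OF \<nu>1 fp1 h, of k] fixed_iter[OF \<nu>2 fp2 h, of k] by (simp add: g_def)
  ultimately have "(\<lambda>k. (\<integral>z. h z \<partial>\<nu>1) - (\<integral>z. h z \<partial>\<nu>2)) \<longlonglongrightarrow> 0" by simp
  hence "(\<integral>z. h z \<partial>\<nu>1) - (\<integral>z. h z \<partial>\<nu>2) = 0" by (simp add: LIMSEQ_const_iff)
  thus "(\<integral>z. cts_step x y z \<partial>\<nu>1) = (\<integral>z. cts_step x y z \<partial>\<nu>2)" by (simp add: h_def)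
qed

end


context chain begin

definition mu :: "nat \<Rightarrow> real measure" where
  "mu k = ((\<lambda>\<nu>. \<nu> \<bind> Pk) ^^ k) (return borel 0)"

lemma mu_0: "mu 0 = return borel 0" by (simp add: mu_def)
lemma mu_Suc: "mu (Suc k) = mu k \<bind> Pk" by (simp add: mu_def)

lemma mu_rd: "real_distribution (mu k)"
proof (induction k)
  case 0 show ?case unfolding mu_0 by (rule rdI) (auto intro: prob_space_return)
next
  case (Suc k) thus ?case unfolding mu_Suc by (rule bind_rd)
qed

definition Cst :: real where "Cst = f 0 0 / (1 - (\<kappa>1 + \<kappa>2))"

lemma Cst_nonneg: "Cst \<ge> 0" using f_nonneg[of 0 0] k by (simp add: Cst_def)

lemma Cst_eq: "f 0 0 + (\<kappa>1 + \<kappa>2) * Cst = Cst"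
proof -
  have "1 - (\<kappa>1 + \<kappa>2) \<noteq> 0" using k by simp
  thus ?thesis by (simp add: Cst_def field_simps)
qed

lemma mu_mom: "(\<integral>\<^sup>+x. ennreal \<bar>x\<bar> \<partial>mu k) \<le> ennreal Cst"
proof (induction k)
  case 0 show ?case unfolding mu_0 by (subst nn_integral_return) auto
next
  case (Suc k)
  have kk: "\<kappa>1 + \<kappa>2 \<ge> 0" using k1 k2 by simp
  have f00: "f 0 0 \<ge> 0" using f_nonneg by simp
  have "(\<integral>\<^sup>+x. ennreal \<bar>x\<bar> \<partial>mu (Suc k)) \<le> ennreal (f 0 0) + ennreal (\<kappa>1 + \<kappa>2) * (\<integral>\<^sup>+x. ennreal \<bar>x\<bar> \<partial>mu k)"
    unfolding mu_Suc by (rule bind_moment[OF mu_rd])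
  also have "\<dots> \<le> ennreal (f 0 0) + ennreal (\<kappa>1 + \<kappa>2) * ennreal Cst"
    using Suc by (intro add_left_mono mult_left_mono) auto
  also have "\<dots> = ennreal (f 0 0 + (\<kappa>1 + \<kappa>2) * Cst)"
  proof -
    have h: "0 \<le> (\<kappa>1 + \<kappa>2) * Cst" using kk Cst_nonneg by simp
    show ?thesis by (simp only: ennreal_plus[OF f00 h] ennreal_mult'[OF kk])
  qed
  also have "\<dots> = ennreal Cst" by (simp only: Cst_eq)
  finally show ?case .
qed

lemma mu_int_Suc: "BL B L h \<Longrightarrow> (\<integral>x. h x \<partial>mu (Suc k)) = (\<integral>x. Phi h x \<partial>mu k)"
  unfolding mu_Suc by (rule bind_integral[OF mu_rd BL_meas]) (auto simp: BL_def)

lemma mu_iter: "BL B L h \<Longrightarrow> (\<integral>x. h x \<partial>mu (m + k)) = (\<integral>x. (Phi ^^ k) h x \<partial>mu m)"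
proof (induction k arbitrary: m)
  case 0 thus ?case by simp
next
  case (Suc k)
  have "(\<integral>x. h x \<partial>mu (m + Suc k)) = (\<integral>x. (Phi ^^ k) h x \<partial>mu (Suc m))"
    using Suc.IH[OF Suc.prems, of "Suc m"] by simp
  also have "\<dots> = (\<integral>x. Phi ((Phi ^^ k) h) x \<partial>mu m)"
    by (rule mu_int_Suc[OF BL_Phi_iter[OF Suc.prems]])
  finally show ?case by simp
qed

lemma mu_diff:
  assumes h: "BL B L h"
  shows "\<bar>(\<integral>x. h x \<partial>mu (Suc k)) - (\<integral>x. h x \<partial>mu k)\<bar> \<le> (\<kappa>1 + \<kappa>2) ^ k * L * Cst"
proof -
  define g where "g = (Phi ^^ k) h"
  have gB: "BL B ((\<kappa>1 + \<kappa>2) ^ k * L) g" unfolding g_def by (rule BL_Phi_iter[OF h])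
  have e1: "(\<integral>x. h x \<partial>mu (Suc k)) = (\<integral>x. g x \<partial>mu 1)"
    using mu_iter[OF h, of 1 k] by (simp add: g_def)
  have "(\<integral>x. h x \<partial>mu k) = (\<integral>x. g x \<partial>mu 0)"
    using mu_iter[OF h, of 0 k] by (simp add: g_def)
  also have "\<dots> = g 0" unfolding mu_0 by (rule integral_return) (auto intro: BL_meas[OF gB])
  finally have e0: "(\<integral>x. h x \<partial>mu k) = g 0" .
  show ?thesis unfolding e1 e0
  proof (rule dist_bound[OF mu_rd BL_meas[OF gB]])
    show "\<bar>g x\<bar> \<le> B" for x using gB by (simp add: BL_def)
    show "\<bar>g x - g 0\<bar> \<le> (\<kappa>1 + \<kappa>2) ^ k * L * \<bar>x\<bar>" for x using gB unfolding BL_def by (metis diff_zero)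
    show "0 \<le> (\<kappa>1 + \<kappa>2) ^ k * L" using gB by (simp add: BL_def)
  qed (auto intro: Cst_nonneg mu_mom)
qed

end


context chain begin

lemma trunc_BL: "BL (real M) 1 (\<lambda>x. min \<bar>x\<bar> (real M))"
  unfolding BL_def by (auto simp: min_def abs_if)

lemma existence:
  "\<exists>\<nu>. real_distribution \<nu> \<and> \<nu> \<bind> Pk = \<nu> \<and> (\<integral>\<^sup>+x. ennreal \<bar>x\<bar> \<partial>\<nu>) \<le> ennreal Cst"
proof -
  have "tight mu" by (rule tight_mom[OF mu_rd mu_mom Cst_nonneg])
  from tight_imp_convergent_subsubsequence[OF this strict_mono_id] obtain r \<nu>
    where r: "strict_mono r" and \<nu>: "real_distribution \<nu>" and wc: "weak_conv_m (mu \<circ> id \<circ> r) \<nu>"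
    by blast
  have wc': "weak_conv_m (\<lambda>n. mu (r n)) \<nu>" using wc by (simp add: comp_def)
  have conv: "(\<lambda>n. \<integral>x. h x \<partial>mu (r n)) \<longlonglongrightarrow> (\<integral>x. h x \<partial>\<nu>)" if h: "BL B L h" for B L h
    by (rule weak_conv_imp_integral_bdd_continuous_conv[OF mu_rd \<nu> wc' BL_cont[OF h], where B=B])
       (use h in \<open>simp add: BL_def\<close>)
  have kr: "(\<lambda>n. (\<kappa>1 + \<kappa>2) ^ r n) \<longlonglongrightarrow> 0"
  proof -
    have "(\<lambda>k. (\<kappa>1 + \<kappa>2) ^ k) \<longlonglongrightarrow> 0" by (rule LIMSEQ_power_zero) (use k1 k2 k in simp)
    from LIMSEQ_subseq_LIMSEQ[OF this r] show ?thesis by (simp add: comp_def)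
  qed
  have fp: "\<nu> \<bind> Pk = \<nu>"
  proof (rule ident_cts[OF bind_rd[OF \<nu>] \<nu>])
    fix x y :: real assume xy: "x < y"
    define h where "h = cts_step x y"
    define L where "L = 1 / (y - x)"
    have h: "BL 1 L h" unfolding h_def L_def by (rule BL_cts[OF xy])
    have h1: "BL 1 ((\<kappa>1 + \<kappa>2) ^ 1 * L) (Phi h)" using BL_Phi_iter[OF h, of 1] by simp
    have e: "(\<integral>z. h z \<partial>(\<nu> \<bind> Pk)) = (\<integral>z. Phi h z \<partial>\<nu>)"
      by (rule bind_integral[where B=1, OF \<nu> BL_meas[OF h]]) (use h in \<open>simp add: BL_def\<close>)
    have "(\<lambda>n. (\<integral>z. Phi h z \<partial>mu (r n)) - (\<integral>z. h z \<partial>mu (r n))) \<longlonglongrightarrow> (\<integral>z. Phi h z \<partial>\<nu>) - (\<integral>z. h z \<partial>\<nu>)"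
      by (intro tendsto_diff conv[OF h1] conv[OF h])
    moreover have "(\<lambda>n. (\<integral>z. Phi h z \<partial>mu (r n)) - (\<integral>z. h z \<partial>mu (r n))) \<longlonglongrightarrow> 0"
    proof (rule Lim_null_comparison)
      show "\<forall>\<^sub>F n in sequentially. norm ((\<integral>z. Phi h z \<partial>mu (r n)) - (\<integral>z. h z \<partial>mu (r n))) \<le> (\<kappa>1 + \<kappa>2) ^ r n * L * Cst"
      proof (rule always_eventually, rule allI)
        fix n
        show "norm ((\<integral>z. Phi h z \<partial>mu (r n)) - (\<integral>z. h z \<partial>mu (r n))) \<le> (\<kappa>1 + \<kappa>2) ^ r n * L * Cst"
          using mu_diff[OF h, of "r n"] mu_int_Suc[OF h, of "r n"] by simp
      qed
      show "(\<lambda>n. (\<kappa>1 + \<kappa>2) ^ r n * L * Cst) \<longlonglongrightarrow> 0"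
        using tendsto_mult[OF tendsto_mult[OF kr tendsto_const[of L]] tendsto_const[of Cst]] by simp
    qed
    ultimately have "(\<integral>z. Phi h z \<partial>\<nu>) - (\<integral>z. h z \<partial>\<nu>) = 0" by (rule LIMSEQ_unique)
    thus "(\<integral>z. cts_step x y z \<partial>(\<nu> \<bind> Pk)) = (\<integral>z. cts_step x y z \<partial>\<nu>)"
      using e by (simp add: h_def)
  qed
  have mom: "(\<integral>\<^sup>+x. ennreal \<bar>x\<bar> \<partial>\<nu>) \<le> ennreal Cst"
  proof -
    interpret \<nu>: real_distribution \<nu> by (rule \<nu>)
    define tr where "tr M x = min \<bar>x\<bar> (real M)" for M :: nat and x :: real
    have trB: "BL (real M) 1 (tr M)" for M unfolding tr_def[abs_def] by (rule trunc_BL)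
    have tr_le: "(\<integral>x. tr M x \<partial>mu k) \<le> Cst" for M k
    proof -
      interpret m: real_distribution "mu k" by (rule mu_rd)
      have int: "integrable (mu k) (tr M)"
        by (rule m.integrable_const_bound[where B="real M"])
           (use trB[of M] BL_meas[OF trB[of M]] in \<open>auto simp: BL_def measurable_cong_sets[OF m.events_eq_borel refl]\<close>)
      have "ennreal (\<integral>x. tr M x \<partial>mu k) = (\<integral>\<^sup>+x. ennreal (tr M x) \<partial>mu k)"
        by (rule nn_integral_eq_integral[OF int, symmetric]) (simp add: tr_def)
      also have "\<dots> \<le> (\<integral>\<^sup>+x. ennreal \<bar>x\<bar> \<partial>mu k)"
        by (intro nn_integral_mono ennreal_leI) (simp add: tr_def)
      also have "\<dots> \<le> ennreal Cst" by (rule mu_mom)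
      finally show ?thesis using Cst_nonneg by (simp add: ennreal_le_iff)
    qed
    have trl: "(\<integral>x. tr M x \<partial>\<nu>) \<le> Cst" for M
      by (rule LIMSEQ_le_const2[OF conv[OF trB[of M]]]) (use tr_le in auto)
    have trn: "(\<integral>\<^sup>+x. ennreal (tr M x) \<partial>\<nu>) \<le> ennreal Cst" for M
    proof -
      have int: "integrable \<nu> (tr M)"
        by (rule \<nu>.integrable_const_bound[where B="real M"])
           (use trB[of M] BL_meas[OF trB[of M]] in \<open>auto simp: BL_def measurable_cong_sets[OF \<nu>.events_eq_borel refl]\<close>)
      have "(\<integral>\<^sup>+x. ennreal (tr M x) \<partial>\<nu>) = ennreal (\<integral>x. tr M x \<partial>\<nu>)"
        by (rule nn_integral_eq_integral[OF int]) (simp add: tr_def)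
      also have "\<dots> \<le> ennreal Cst" using trl by (rule ennreal_leI)
      finally show ?thesis .
    qed
    have sup: "(SUP M. ennreal (tr M x)) = ennreal \<bar>x\<bar>" for x
    proof (rule antisym)
      show "(SUP M. ennreal (tr M x)) \<le> ennreal \<bar>x\<bar>"
        by (rule SUP_least) (simp add: tr_def ennreal_leI)
      have "tr (nat \<lceil>\<bar>x\<bar>\<rceil>) x = \<bar>x\<bar>" unfolding tr_def by (simp add: min_def)
      thus "ennreal \<bar>x\<bar> \<le> (SUP M. ennreal (tr M x))"
        by (intro SUP_upper2[of "nat \<lceil>\<bar>x\<bar>\<rceil>"]) auto
    qed
    have "(\<integral>\<^sup>+x. ennreal \<bar>x\<bar> \<partial>\<nu>) = (\<integral>\<^sup>+x. (SUP M. ennreal (tr M x)) \<partial>\<nu>)"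
      by (simp add: sup)
    also have "\<dots> = (SUP M. (\<integral>\<^sup>+x. ennreal (tr M x) \<partial>\<nu>))"
    proof (rule nn_integral_monotone_convergence_SUP)
      show "incseq (\<lambda>M x. ennreal (tr M x))"
        by (auto simp: incseq_def le_fun_def tr_def intro!: ennreal_leI)
      show "(\<lambda>x. ennreal (tr M x)) \<in> borel_measurable \<nu>" for M
        using BL_meas[OF trB[of M]] by (simp add: measurable_cong_sets[OF \<nu>.events_eq_borel refl])
    qed
    also have "\<dots> \<le> ennreal Cst" by (rule SUP_least) (rule trn)
    finally show ?thesis .
  qed
  show ?thesis using \<nu> fp mom by blast
qed

end


context chain begin

definition K :: "nat \<times> real \<Rightarrow> (nat \<times> real) measure" where "K x = Gk (rr x)"

lemma trans_K: "trans_kernel f = K"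
  by (rule ext) (simp add: trans_kernel_def K_def Gk_def rr_def Let_def)

lemma K_meas[measurable]: "K \<in> borel \<rightarrow>\<^sub>M subprob_algebra borel"
  unfolding K_def[abs_def] by (rule measurable_compose[OF rr_meas Gk_meas])

lemma K_meas': "sets M = sets borel \<Longrightarrow> K \<in> M \<rightarrow>\<^sub>M subprob_algebra borel"
  using K_meas measurable_cong_sets[of M borel "subprob_algebra borel" "subprob_algebra borel"] by simp

lemma pair_meas: "(\<lambda>n. (n, s)) \<in> measure_pmf (pois s) \<rightarrow>\<^sub>M (borel :: (nat \<times> real) measure)"
  by simp

lemma Gk_rr: "distr (Gk s) borel rr = Pk s"
  unfolding Gk_def Pk_def by (subst distr_distr[OF rr_meas pair_meas]) (simp add: comp_def rr_def)

lemma Gk_snd: "distr (Gk s) borel snd = return borel s"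
proof -
  have sm: "(snd :: nat \<times> real \<Rightarrow> real) \<in> borel \<rightarrow>\<^sub>M borel"
    by (rule borel_measurable_continuous_onI) (intro continuous_intros)
  show ?thesis unfolding Gk_def
    by (subst distr_distr[OF sm pair_meas]) (simp add: comp_def prob_space.distr_const[OF measure_pmf.prob_space_axioms])
qed

lemma stationary_iff:
  "stationary f \<pi> \<longleftrightarrow> prob_space \<pi> \<and> sets \<pi> = sets borel \<and> emeasure \<pi> (UNIV \<times> {0..}) = 1 \<and> \<pi> \<bind> K = \<pi>"
proof -
  have eq: "(\<forall>A\<in>sets borel. emeasure \<pi> A = (\<integral>\<^sup>+ x. emeasure (K x) A \<partial>\<pi>)) \<longleftrightarrow> \<pi> \<bind> K = \<pi>"
    if p: "prob_space \<pi>" and s: "sets \<pi> = sets borel"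
  proof -
    have ne: "space \<pi> \<noteq> {}" using prob_space.not_empty[OF p] .
    have Km: "K \<in> \<pi> \<rightarrow>\<^sub>M subprob_algebra borel" by (rule K_meas'[OF s])
    have sb: "sets (\<pi> \<bind> K) = sets borel" by (rule sets_bind[OF _ ne]) (simp add: K_def)
    have em: "emeasure (\<pi> \<bind> K) A = (\<integral>\<^sup>+ x. emeasure (K x) A \<partial>\<pi>)" if "A \<in> sets borel" for A
      by (rule emeasure_bind[OF ne Km that])
    show ?thesis
    proof
      assume H: "\<forall>A\<in>sets borel. emeasure \<pi> A = (\<integral>\<^sup>+ x. emeasure (K x) A \<partial>\<pi>)"
      show "\<pi> \<bind> K = \<pi>" by (rule measure_eqI) (use sb s H em in auto)
    next
      assume "\<pi> \<bind> K = \<pi>"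
      thus "\<forall>A\<in>sets borel. emeasure \<pi> A = (\<integral>\<^sup>+ x. emeasure (K x) A \<partial>\<pi>)" using em by metis
    qed
  qed
  show ?thesis unfolding stationary_def trans_K using eq by blast
qed

lemma snd_meas: "(snd :: nat \<times> real \<Rightarrow> real) \<in> borel \<rightarrow>\<^sub>M borel"
  by (rule borel_measurable_continuous_onI) (intro continuous_intros)

lemma from_pi:
  assumes p: "prob_space \<pi>" and s: "sets \<pi> = sets borel" and H: "\<pi> \<bind> K = \<pi>"
  shows "real_distribution (distr \<pi> borel snd) \<and> (distr \<pi> borel snd) \<bind> Pk = distr \<pi> borel snd
         \<and> \<pi> = (distr \<pi> borel snd) \<bind> Gk"
proof -
  have ne: "space \<pi> \<noteq> {}" using prob_space.not_empty[OF p] .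
  have Km: "K \<in> \<pi> \<rightarrow>\<^sub>M subprob_algebra borel" by (rule K_meas'[OF s])
  have sm: "snd \<in> \<pi> \<rightarrow>\<^sub>M borel" using snd_meas measurable_cong_sets[OF s refl] by blast
  have rm: "rr \<in> \<pi> \<rightarrow>\<^sub>M borel" using rr_meas measurable_cong_sets[OF s refl] by blast
  define \<nu> where "\<nu> = distr \<pi> borel snd"
  have rd: "real_distribution \<nu>"
    unfolding \<nu>_def by (rule rdI) (auto intro: prob_space.prob_space_distr[OF p sm])
  have d1: "\<nu> = distr \<pi> borel rr"
  proof -
    have "\<nu> = distr (\<pi> \<bind> K) borel snd" unfolding \<nu>_def using H by simp
    also have "\<dots> = \<pi> \<bind> (\<lambda>x. distr (K x) borel snd)"
      by (rule distr_bind[OF Km ne snd_meas])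
    also have "\<dots> = \<pi> \<bind> (\<lambda>x. return borel (rr x))" by (simp add: K_def Gk_snd)
    also have "\<dots> = distr \<pi> borel rr" by (rule bind_return_distr'[OF ne rm])
    finally show ?thesis .
  qed
  have d2: "\<pi> = \<nu> \<bind> Gk"
  proof -
    have "\<pi> = \<pi> \<bind> (\<lambda>x. Gk (rr x))" using H by (simp add: K_def[abs_def])
    also have "\<dots> = distr \<pi> borel rr \<bind> Gk" by (rule bind_distr[OF rm Gk_meas ne, symmetric])
    finally show ?thesis using d1 by simp
  qed
  have d3: "\<nu> \<bind> Pk = \<nu>"
  proof -
    interpret real_distribution \<nu> by (rule rd)
    have "\<nu> = distr (\<nu> \<bind> Gk) borel rr" using d1 d2 by simp
    also have "\<dots> = \<nu> \<bind> (\<lambda>s. distr (Gk s) borel rr)"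
      by (rule distr_bind[OF Gk_meas' not_empty rr_meas]) simp
    also have "\<dots> = \<nu> \<bind> Pk" by (simp add: Gk_rr)
    finally show ?thesis by simp
  qed
  show ?thesis using rd d2 d3 unfolding \<nu>_def by blast
qed

lemma set_meas: "UNIV \<times> {0..} \<in> sets (borel :: (nat \<times> real) measure)"
  by (rule borel_closed) (intro closed_Times closed_atLeast closed_UNIV)

lemma to_pi:
  assumes rd: "real_distribution \<nu>" and fp: "\<nu> \<bind> Pk = \<nu>"
  shows "prob_space (\<nu> \<bind> Gk) \<and> sets (\<nu> \<bind> Gk) = sets borel \<and>
         emeasure (\<nu> \<bind> Gk) (UNIV \<times> {0..}) = 1 \<and> (\<nu> \<bind> Gk) \<bind> K = \<nu> \<bind> Gk"
proof -
  interpret real_distribution \<nu> by (rule rd)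
  have Gm: "Gk \<in> \<nu> \<rightarrow>\<^sub>M subprob_algebra borel" by (rule Gk_meas') simp
  have Pm: "Pk \<in> \<nu> \<rightarrow>\<^sub>M subprob_algebra borel" by (rule Pk_meas') simp
  have ps: "prob_space (\<nu> \<bind> Gk)" by (rule prob_space_bind[OF _ Gm]) (simp add: prob_Gk)
  have ss: "sets (\<nu> \<bind> Gk) = sets borel" by (rule sets_bind) (auto simp: not_empty)
  have inv: "(\<nu> \<bind> Gk) \<bind> K = \<nu> \<bind> Gk"
  proof -
    have "(\<nu> \<bind> Gk) \<bind> K = \<nu> \<bind> (\<lambda>s. Gk s \<bind> K)" by (rule bind_assoc[OF Gm K_meas])
    also have "(\<lambda>s. Gk s \<bind> K) = (\<lambda>s. Pk s \<bind> Gk)"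
    proof
      fix s
      have ne: "space (Gk s) \<noteq> {}" using prob_space.not_empty[OF prob_Gk] .
      have rm: "rr \<in> Gk s \<rightarrow>\<^sub>M borel" using rr_meas measurable_cong_sets[OF sets_Gk refl] by blast
      have "Gk s \<bind> K = Gk s \<bind> (\<lambda>x. Gk (rr x))" by (simp add: K_def[abs_def])
      also have "\<dots> = distr (Gk s) borel rr \<bind> Gk" by (rule bind_distr[OF rm Gk_meas ne, symmetric])
      finally show "Gk s \<bind> K = Pk s \<bind> Gk" by (simp add: Gk_rr)
    qed
    also have "\<nu> \<bind> (\<lambda>s. Pk s \<bind> Gk) = (\<nu> \<bind> Pk) \<bind> Gk" by (rule bind_assoc[OF Pm Gk_meas, symmetric])
    finally show ?thesis using fp by simp
  qed
  have Pk1: "emeasure (Pk s) {0..} = 1" for s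
  proof -
    have "emeasure (Pk s) {0..} = emeasure (measure_pmf (pois s)) ((\<lambda>n. f (max 0 s) n) -` {0..} \<inter> space (measure_pmf (pois s)))"
      unfolding Pk_def by (rule emeasure_distr) auto
    also have "(\<lambda>n. f (max 0 s) n) -` {0..} \<inter> space (measure_pmf (pois s)) = UNIV"
      using f_nonneg by auto
    finally show ?thesis by (simp add: measure_pmf.emeasure_space_1[simplified])
  qed
  have Gk1: "emeasure (Gk s) (UNIV \<times> {0..}) = indicator {0..} s" for s
  proof -
    have "emeasure (Gk s) (UNIV \<times> {0..}) = emeasure (measure_pmf (pois s)) ((\<lambda>n. (n, s)) -` (UNIV \<times> {0..}) \<inter> space (measure_pmf (pois s)))"
      unfolding Gk_def by (rule emeasure_distr[OF pair_meas set_meas])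
    also have "(\<lambda>n. (n, s)) -` (UNIV \<times> {0..}) \<inter> space (measure_pmf (pois s)) = (if s \<ge> 0 then UNIV else {})"
      by auto
    finally show ?thesis by (simp add: measure_pmf.emeasure_space_1[simplified])
  qed
  have nu1: "emeasure \<nu> {0..} = 1"
  proof -
    have "emeasure \<nu> {0..} = emeasure (\<nu> \<bind> Pk) {0..}" using fp by simp
    also have "\<dots> = (\<integral>\<^sup>+s. emeasure (Pk s) {0..} \<partial>\<nu>)" by (rule emeasure_bind[OF not_empty Pm]) simp
    also have "\<dots> = 1" by (simp add: Pk1 emeasure_space_1[simplified space_eq_univ])
    finally show ?thesis .
  qed
  have em: "emeasure (\<nu> \<bind> Gk) (UNIV \<times> {0..}) = 1"
  proof -
    have "emeasure (\<nu> \<bind> Gk) (UNIV \<times> {0..}) = (\<integral>\<^sup>+s. emeasure (Gk s) (UNIV \<times> {0..}) \<partial>\<nu>)"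
      by (rule emeasure_bind[OF not_empty Gm set_meas])
    also have "\<dots> = (\<integral>\<^sup>+s. indicator {0..} s \<partial>\<nu>)" by (simp add: Gk1)
    also have "\<dots> = emeasure \<nu> {0..}" by (rule nn_integral_indicator) simp
    finally show ?thesis using nu1 by simp
  qed
  show ?thesis using ps ss em inv by blast
qed

end


context chain begin

lemma snd_moment:
  assumes rd: "real_distribution \<nu>"
  shows "(\<integral>\<^sup>+x. ennreal (snd x) \<partial>(\<nu> \<bind> Gk)) \<le> (\<integral>\<^sup>+x. ennreal \<bar>x\<bar> \<partial>\<nu>)"
proof -
  interpret real_distribution \<nu> by (rule rd)
  have Gm: "Gk \<in> \<nu> \<rightarrow>\<^sub>M subprob_algebra borel" by (rule Gk_meas') simp
  have sm: "(\<lambda>x. ennreal (snd x)) \<in> borel_measurable (borel :: (nat \<times> real) measure)"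
    using snd_meas by measurable
  have "(\<integral>\<^sup>+x. ennreal (snd x) \<partial>(\<nu> \<bind> Gk)) = (\<integral>\<^sup>+s. (\<integral>\<^sup>+x. ennreal (snd x) \<partial>Gk s) \<partial>\<nu>)"
    by (rule nn_integral_bind[OF sm Gm])
  also have "\<dots> = (\<integral>\<^sup>+s. ennreal s \<partial>\<nu>)"
  proof (rule nn_integral_cong)
    fix s
    have "(\<integral>\<^sup>+x. ennreal (snd x) \<partial>Gk s) = (\<integral>\<^sup>+n. ennreal s \<partial>measure_pmf (pois s))"
      unfolding Gk_def by (subst nn_integral_distr[OF pair_meas]) (auto simp: measurable_cong_sets[OF sets_distr refl] sm)
    also have "\<dots> = ennreal s" by (simp add: measure_pmf.emeasure_space_1[simplified])
    finally show "(\<integral>\<^sup>+x. ennreal (snd x) \<partial>Gk s) = ennreal s" .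
  qed
  also have "\<dots> \<le> (\<integral>\<^sup>+x. ennreal \<bar>x\<bar> \<partial>\<nu>)" by (intro nn_integral_mono ennreal_leI) simp
  finally show ?thesis .
qed

lemma return_stat:
  assumes "f 0 0 = 0"
  shows "stationary f (return borel (0, 0))"
proof -
  have K0: "K (0, 0) = return borel (0, 0)"
  proof -
    have "K (0, 0) = Gk 0" using assms by (simp add: K_def rr_def)
    also have "\<dots> = distr (return (count_space UNIV) 0) borel (\<lambda>n. (n, 0::real))"
      by (simp add: Gk_def pois_def return_pmf.rep_eq)
    also have "\<dots> = return borel (0, 0)" by (subst distr_return) auto
    finally show ?thesis .
  qed
  show ?thesis unfolding stationary_iff
  proof (intro conjI)
    show "prob_space (return borel (0::nat, 0::real))" by (rule prob_space_return) simp
    show "sets (return borel (0::nat, 0::real)) = sets borel" by simp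
    show "emeasure (return borel (0::nat, 0::real)) (UNIV \<times> {0..}) = 1"
      by (subst emeasure_return[OF set_meas]) simp
    show "return borel (0::nat, 0::real) \<bind> K = return borel (0, 0)"
      by (subst bind_return[OF K_meas]) (auto simp: K0)
  qed
qed

lemma not_point:
  assumes st: "stationary f \<pi>" and pos: "f 0 0 > 0" and l: "l \<ge> 0"
  shows "measure \<pi> {(y, l)} < 1"
proof (rule ccontr)
  assume "\<not> measure \<pi> {(y, l)} < 1"
  from st have p: "prob_space \<pi>" and s: "sets \<pi> = sets borel" and H: "\<pi> \<bind> K = \<pi>"
    unfolding stationary_iff by auto
  interpret prob_space \<pi> by (rule p)
  have m1: "measure \<pi> {(y, l)} = 1" using \<open>\<not> _\<close> prob_le_1 by (simp add: not_less antisym)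
  have AE: "AE x in \<pi>. x \<in> {(y, l)}" by (rule AE_prob_1[OF m1])
  have sing: "{(y, l)} \<in> sets (borel :: (nat \<times> real) measure)" by simp
  have Km: "K \<in> \<pi> \<rightarrow>\<^sub>M subprob_algebra borel" by (rule K_meas'[OF s])
  have "1 = emeasure \<pi> {(y, l)}" using m1 by (simp add: emeasure_eq_measure)
  also have "\<dots> = emeasure (\<pi> \<bind> K) {(y, l)}" using H by simp
  also have "\<dots> = (\<integral>\<^sup>+x. emeasure (K x) {(y, l)} \<partial>\<pi>)" by (rule emeasure_bind[OF not_empty Km sing])
  also have "\<dots> = (\<integral>\<^sup>+x. emeasure (K (y, l)) {(y, l)} \<partial>\<pi>)"
    by (rule nn_integral_cong_AE) (use AE in auto)
  also have "\<dots> = emeasure (K (y, l)) {(y, l)}" by (simp add: emeasure_space_1)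
  finally have K1: "emeasure (K (y, l)) {(y, l)} = 1" by simp
  define r where "r = f l y"
  have Kyl: "K (y, l) = Gk r" using l by (simp add: K_def rr_def r_def)
  have "emeasure (Gk r) {(y, l)} = emeasure (measure_pmf (pois r)) ((\<lambda>n. (n, r)) -` {(y, l)} \<inter> space (measure_pmf (pois r)))"
    unfolding Gk_def by (rule emeasure_distr[OF pair_meas sing])
  also have "(\<lambda>n. (n, r)) -` {(y, l)} \<inter> space (measure_pmf (pois r)) = (if r = l then {y} else {})" by auto
  finally have e: "emeasure (Gk r) {(y, l)} = emeasure (measure_pmf (pois r)) (if r = l then {y} else {})" .
  have rl: "r = l"
  proof (rule ccontr)
    assume "r \<noteq> l" thus False using e K1 Kyl by simp
  qed
  have py: "pmf (pois l) y = 1" using e K1 Kyl rl by (simp add: emeasure_pmf_single)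
  show False
  proof (cases "l > 0")
    case True
    have "pmf (pois l) (Suc y) > 0" using True by (simp add: pmf_pois)
    moreover have "measure (measure_pmf (pois l)) {y, Suc y} = pmf (pois l) y + pmf (pois l) (Suc y)"
      by (subst measure_measure_pmf_finite) auto
    moreover have "measure (measure_pmf (pois l)) {y, Suc y} \<le> 1" by (rule measure_pmf.prob_le_1)
    ultimately show False using py by simp
  next
    case False
    hence l0: "l = 0" using l by simp
    hence "pmf (return_pmf 0) y = 1" using py by (simp add: pois_def)
    hence "y = 0" by (simp split: split_indicator_asm)
    thus False using rl l0 pos by (simp add: r_def)
  qed
qed

end

theorem theorem2p1:
  fixes f :: "real \<Rightarrow> nat \<Rightarrow> real" and \<kappa>1 \<kappa>2 :: real
  assumes f_nonneg: "\<And>l y. l \<ge> 0 \<Longrightarrow> f l y \<ge> 0"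
    and k1: "\<kappa>1 \<ge> 0" and k2: "\<kappa>2 \<ge> 0" and k: "\<kappa>1 + \<kappa>2 < 1"
    and contr: "\<And>l l' y y'. l \<ge> 0 \<Longrightarrow> l' \<ge> 0 \<Longrightarrow>
                  \<bar>f l y - f l' y'\<bar> \<le> \<kappa>1 * \<bar>l - l'\<bar> + \<kappa>2 * \<bar>real y - real y'\<bar>"
  shows "\<exists>\<pi>. stationary f \<pi> \<and> (\<forall>\<pi>'. stationary f \<pi>' \<longrightarrow> \<pi>' = \<pi>) \<and>
           (\<integral>\<^sup>+ x. ennreal (snd x) \<partial>\<pi>) < \<infinity> \<and>
           (f 0 0 = 0 \<longrightarrow> \<pi> = return SS (0, 0)) \<and>
           (f 0 0 > 0 \<longrightarrow> (\<forall>y l. l \<ge> 0 \<longrightarrow> measure \<pi> {(y, l)} < 1))"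
proof -
  interpret chain f \<kappa>1 \<kappa>2 by (unfold_locales) (fact f_nonneg k1 k2 k contr)+
  obtain \<nu> where rd: "real_distribution \<nu>" and fp: "\<nu> \<bind> Pk = \<nu>"
    and mom: "(\<integral>\<^sup>+x. ennreal \<bar>x\<bar> \<partial>\<nu>) \<le> ennreal Cst"
    using existence by blast
  define \<pi> where "\<pi> = \<nu> \<bind> Gk"
  have st: "stationary f \<pi>" unfolding stationary_iff \<pi>_def using to_pi[OF rd fp] by blast
  have uniq: "\<pi>' = \<pi>" if st': "stationary f \<pi>'" for \<pi>'
  proof -
    from st' have "prob_space \<pi>'" "sets \<pi>' = sets borel" "\<pi>' \<bind> K = \<pi>'" unfolding stationary_iff by auto
    from from_pi[OF this] have rd': "real_distribution (distr \<pi>' borel snd)"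
      and fp': "distr \<pi>' borel snd \<bind> Pk = distr \<pi>' borel snd"
      and e': "\<pi>' = distr \<pi>' borel snd \<bind> Gk" by auto
    have "distr \<pi>' borel snd = \<nu>" by (rule unique_fp[OF rd' fp' rd fp])
    thus ?thesis using e' by (simp add: \<pi>_def)
  qed
  have fin: "(\<integral>\<^sup>+ x. ennreal (snd x) \<partial>\<pi>) < \<infinity>"
  proof -
    have "(\<integral>\<^sup>+ x. ennreal (snd x) \<partial>\<pi>) \<le> ennreal Cst"
      unfolding \<pi>_def using snd_moment[OF rd] mom by (rule order_trans)
    also have "\<dots> < \<infinity>" by simp
    finally show ?thesis .
  qed
  have iii1: "f 0 0 = 0 \<longrightarrow> \<pi> = return SS (0, 0)"
    using uniq return_stat by auto
  have iii2: "f 0 0 > 0 \<longrightarrow> (\<forall>y l. l \<ge> 0 \<longrightarrow> measure \<pi> {(y, l)} < 1)"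
    using not_point[OF st] by blast
  show ?thesis using st uniq fin iii1 iii2 by blast
qed



end
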